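(* Let $\mathcal{A}=\{\pm e_1,\ldots,\pm e_n\}$ be the set of signed canonical unit vectors in $\mathbb{R}^n$, so that $\|\cdot\|_{\mathcal{A}}=\|\cdot\|_1$. Suppose $x^\star\in\mathbb{R}^n$ has $k\ge1$ nonzero entries, and let $\gamma\in[0,1]$. Then $$\phi_\gamma(x^\star,\mathcal{A}):=\inf\left\{\frac{\|z\|_2}{\|z\|_1}: 0\ne z\in C_\gamma(x^\star,\mathcal{A})\right\}\ \ge\ \frac{1-\gamma}{2\sqrt{k}},$$ where $C_\gamma(x^\star,\mathcal{A})=\operatorname{cone}\left(\{z\in\mathbb{R}^n:\|x^\star+z\|_1\le\|x^\star\|_1+\gamma\|z\|_1\}\right)$.
   Context: $\operatorname{cone}(X)=\{\lambda x:\lambda\ge0,x\in X\}$ denotes the conic hull. *)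

theory Defs
  imports "HOL-Analysis.Analysis"
begin

text \<open>l1 norm on R^n, which equals the atomic norm for A = {+-e_i}.\<close>
definition norm1 :: "real ^ 'n \<Rightarrow> real" where
  "norm1 x = (\<Sum>i\<in>UNIV. \<bar>x $ i\<bar>)"

definition conic_hull_set :: "('a::real_vector) set \<Rightarrow> 'a set" where
  "conic_hull_set X = {c *\<^sub>R x | c x. c \<ge> 0 \<and> x \<in> X}"

definition C_gamma :: "real \<Rightarrow> real ^ 'n \<Rightarrow> (real ^ 'n) set" where
  "C_gamma \<gamma> xs = conic_hull_set {z. norm1 (xs + z) \<le> norm1 xs + \<gamma> * norm1 z}"

definition phi_gamma :: "real \<Rightarrow> real ^ 'n \<Rightarrow> real" where
  "phi_gamma \<gamma> xs = Inf {norm z / norm1 z | z. z \<noteq> 0 \<and> z \<in> C_gamma \<gamma> xs}"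

end

theory Submission
  imports Defs
begin

lemma norm1_scale: "c \<ge> 0 \<Longrightarrow> norm1 (c *\<^sub>R y) = c * norm1 y"
  by (simp add: norm1_def abs_mult sum_distrib_left)

lemma norm1_pos: "z \<noteq> 0 \<Longrightarrow> norm1 z > 0"
proof -
  assume "z \<noteq> 0"
  then obtain i where i: "z $ i \<noteq> 0" by (metis vec_eq_iff zero_index)
  have "\<bar>z $ i\<bar> \<le> norm1 z" unfolding norm1_def
    by (rule member_le_sum) auto
  with i show ?thesis by linarith
qed

lemma sumS_le:
  fixes z :: "real ^ 'n"
  shows "(\<Sum>i\<in>S. \<bar>z $ i\<bar>) \<le> sqrt (real (card S)) * norm z"
proof -
  have fin: "finite S" by simp
  have "(\<Sum>i\<in>S. \<bar>z $ i\<bar>) = (\<Sum>i\<in>S. \<bar>z $ i\<bar> * \<bar>(\<lambda>_. 1::real) i\<bar>)" by simp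
  also have "\<dots> \<le> L2_set (\<lambda>i. z $ i) S * L2_set (\<lambda>_. 1::real) S"
    by (rule L2_set_mult_ineq)
  also have "L2_set (\<lambda>_. 1::real) S = sqrt (real (card S))"
    by (simp add: L2_set_constant)
  also have "L2_set (\<lambda>i. z $ i) S \<le> norm z"
  proof -
    have "(\<Sum>i\<in>S. (z $ i)\<^sup>2) \<le> (\<Sum>i\<in>UNIV. (z $ i)\<^sup>2)"
      by (rule sum_mono2) auto
    then have "sqrt (\<Sum>i\<in>S. (z $ i)\<^sup>2) \<le> sqrt (\<Sum>i\<in>UNIV. (z $ i)\<^sup>2)"
      by (rule real_sqrt_le_mono)
    then show ?thesis by (simp add: L2_set_def norm_vec_def)
  qed
  ultimately have "(\<Sum>i\<in>S. \<bar>z $ i\<bar>) \<le> L2_set (\<lambda>i. z $ i) S * sqrt (real (card S))"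
    and "L2_set (\<lambda>i. z $ i) S \<le> norm z" by simp_all
  then show ?thesis
    by (metis mult.commute mult_left_mono order_trans real_sqrt_ge_zero of_nat_0_le_iff)
qed

lemma key:
  fixes xs y :: "real ^ 'n"
  assumes k: "card {i. xs $ i \<noteq> 0} = k" and "k \<ge> 1"
    and g: "0 \<le> \<gamma>" "\<gamma> \<le> 1"
    and y: "norm1 (xs + y) \<le> norm1 xs + \<gamma> * norm1 y"
  shows "(1 - \<gamma>) * norm1 y \<le> 2 * sqrt (real k) * norm y"
proof -
  define S where "S = {i. xs $ i \<noteq> 0}"
  define A where "A = (\<Sum>i\<in>S. \<bar>y $ i\<bar>)"
  define B where "B = (\<Sum>i\<in>-S. \<bar>y $ i\<bar>)"
  have split: "sum g UNIV = sum g S + sum g (-S)" for g :: "'n \<Rightarrow> real"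
    using sum.union_disjoint[of S "-S" g] by (simp add: Compl_partition)
  have n1: "norm1 y = A + B" unfolding A_def B_def norm1_def
    using sum.union_disjoint[of S "-S"] by (simp add: Compl_partition)
  have "norm1 xs + (\<Sum>i\<in>UNIV. (if i \<in> S then - \<bar>y $ i\<bar> else \<bar>y $ i\<bar>))
      = (\<Sum>i\<in>UNIV. \<bar>xs $ i\<bar> + (if i \<in> S then - \<bar>y $ i\<bar> else \<bar>y $ i\<bar>))"
    by (simp add: sum.distrib norm1_def)
  also have "\<dots> \<le> norm1 (xs + y)"
    unfolding norm1_def by (rule sum_mono) (auto simp: S_def)
  finally have L: "norm1 xs + (\<Sum>i\<in>UNIV. (if i \<in> S then - \<bar>y $ i\<bar> else \<bar>y $ i\<bar>)) \<le> norm1 (xs + y)" .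
  have "(\<Sum>i\<in>UNIV. (if i \<in> S then - \<bar>y $ i\<bar> else \<bar>y $ i\<bar>)) = B - A"
  proof -
    have "(\<Sum>i\<in>UNIV. (if i \<in> S then - \<bar>y $ i\<bar> else \<bar>y $ i\<bar>))
        = (\<Sum>i\<in>S. (if i \<in> S then - \<bar>y $ i\<bar> else \<bar>y $ i\<bar>)) + (\<Sum>i\<in>-S. (if i \<in> S then - \<bar>y $ i\<bar> else \<bar>y $ i\<bar>))"
      by (rule split)
    also have "\<dots> = B - A" unfolding A_def B_def by (simp add: sum_negf)
    finally show ?thesis .
  qed
  with L have "B - A \<le> \<gamma> * norm1 y" using y by linarith
  then have "B - A \<le> \<gamma> * (A + B)" using n1 by simp
  then have "(1 - \<gamma>) * (A + B) \<le> 2 * A" by (simp add: algebra_simps)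
  moreover have "A \<le> sqrt (real k) * norm y" unfolding A_def using sumS_le k S_def by metis
  ultimately show ?thesis using n1 by (simp add: mult.assoc)
qed

theorem proposition4:
  fixes xs :: "real ^ 'n" and k :: nat and \<gamma> :: real
  assumes "card {i. xs $ i \<noteq> 0} = k" and "k \<ge> 1"
    and "0 \<le> \<gamma>" and "\<gamma> \<le> 1"
  shows "phi_gamma \<gamma> xs \<ge> (1 - \<gamma>) / (2 * sqrt (real k))"
proof -
  have kpos: "sqrt (real k) > 0" using assms(2) by simp
  have xs0: "xs \<noteq> 0" using assms(1,2) by (auto)
  have m0: "(- xs) \<in> {z. norm1 (xs + z) \<le> norm1 xs + \<gamma> * norm1 z}"
      using assms(3)
      by (simp add: norm1_def sum_nonneg)
  have mem: "- xs \<in> C_gamma \<gamma> xs" unfolding C_gamma_def conic_hull_set_def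
    using m0 by (metis (mono_tags, lifting) CollectI scaleR_one zero_le_one)
  show ?thesis unfolding phi_gamma_def
  proof (rule cInf_greatest)
    show "{norm z / norm1 z |z. z \<noteq> 0 \<and> z \<in> C_gamma \<gamma> xs} \<noteq> {}"
      using mem xs0 by (metis (mono_tags, lifting) CollectI empty_iff neg_equal_0_iff_equal)
  next
    fix r assume "r \<in> {norm z / norm1 z |z. z \<noteq> 0 \<and> z \<in> C_gamma \<gamma> xs}"
    then obtain z c y where z: "z \<noteq> 0" "r = norm z / norm1 z" "z = c *\<^sub>R y" "c \<ge> 0"
      and y: "norm1 (xs + y) \<le> norm1 xs + \<gamma> * norm1 y"
      unfolding C_gamma_def conic_hull_set_def by blast
    have c: "c > 0" using z by (cases "c = 0") auto
    have y0: "y \<noteq> 0" using z by auto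
    have r: "r = norm y / norm1 y"
      using z c by (simp add: norm1_scale)
    have ineq: "(1 - \<gamma>) * norm1 y \<le> 2 * sqrt (real k) * norm y"
      by (rule key[OF assms y])
    have p: "norm1 y > 0" using norm1_pos y0 by blast
    show "(1 - \<gamma>) / (2 * sqrt (real k)) \<le> r"
      unfolding r using ineq p kpos by (simp add: divide_simps mult.commute mult.left_commute)
  qed
qed

end
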